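(* If a regular curve $\gamma: I\to\mathbb{E}^4$ admits a generalized Bishop frame of type F, then it admits a generalized Bishop frame of type D.
   Context: A regular curve $\gamma: I\to\mathbb{E}^4$ ($I$ an open interval) is considered with arc-length parametrization; $\mathbb{T}=\gamma'$ is its unit tangent vector. A frame on $\gamma$ is an ordered orthonormal frame $(\mathbb{T},\mathbb{Z}_1,\mathbb{Z}_2,\mathbb{Z}_3)$ of smooth vector fields along $\gamma$ whose first vector is $\mathbb{T}$; it is identified with the smooth map $\mathbb{Z}: I\to O(4)$ whose rows are these vectors. Its coefficient matrix is the $\mathfrak{o}(4)$-valued function $X$ with $\mathbb{Z}'=X\mathbb{Z}$. A frame is of type D, resp. F, if, after possibly permuting $\mathbb{Z}_1,\mathbb{Z}_2,\mathbb{Z}_3$ (keeping $\mathbb{T}$ first), its coefficient matrix has the form, for some smooth functions $x_1,x_2,x_3$ (no sign conditions): Type D: $\begin{pmatrix}0&x_1&0&0\\-x_1&0&x_2&x_3\\0&-x_2&0&0\\0&-x_3&0&0\end{pmatrix}$; Type F: $\begin{pmatrix}0&x_1&0&0\\-x_1&0&x_2&0\\0&-x_2&0&x_3\\0&0&-x_3&0\end{pmatrix}$. *)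

theory Defs
  imports "HOL-Analysis.Analysis"
begin

definition smooth_on :: "real set \<Rightarrow> (real \<Rightarrow> 'a::real_normed_vector) \<Rightarrow> bool" where
  "smooth_on I f \<longleftrightarrow> (\<exists>D :: nat \<Rightarrow> real \<Rightarrow> 'a. D 0 = f \<and>
      (\<forall>n. \<forall>t\<in>I. (D n has_vector_derivative D (Suc n) t) (at t)))"

definition open_interval :: "real set \<Rightarrow> bool" where
  "open_interval I \<longleftrightarrow> open I \<and> is_interval I \<and> I \<noteq> {}"

definition unit_speed_curve :: "real set \<Rightarrow> (real \<Rightarrow> real^4) \<Rightarrow> bool" where
  "unit_speed_curve I \<gamma> \<longleftrightarrow> open_interval I \<and> smooth_on I \<gamma> \<and>
     (\<forall>t\<in>I. \<gamma> differentiable (at t) \<and> norm (vector_derivative \<gamma> (at t)) = 1)"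

(* a frame on \<gamma>: rows (T, Z1, Z2, Z3) orthonormal, smooth, first row the unit tangent *)
definition is_frame :: "real set \<Rightarrow> (real \<Rightarrow> real^4) \<Rightarrow> (real \<Rightarrow> real^4^4) \<Rightarrow> bool" where
  "is_frame I \<gamma> Z \<longleftrightarrow> smooth_on I Z \<and>
     (\<forall>t\<in>I. orthogonal_matrix (Z t) \<and> Z t $ 1 = vector_derivative \<gamma> (at t))"

definition matD :: "real \<Rightarrow> real \<Rightarrow> real \<Rightarrow> real^4^4" where
  "matD x1 x2 x3 = vector [vector [0, x1, 0, 0], vector [-x1, 0, x2, x3],
                           vector [0, -x2, 0, 0], vector [0, -x3, 0, 0]]"

definition matF :: "real \<Rightarrow> real \<Rightarrow> real \<Rightarrow> real^4^4" where
  "matF x1 x2 x3 = vector [vector [0, x1, 0, 0], vector [-x1, 0, x2, 0],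
                           vector [0, -x2, 0, x3], vector [0, 0, -x3, 0]]"

(* Z is a frame whose coefficient matrix, after permuting Z1,Z2,Z3 (keeping T first),
   has the form M (x1 t) (x2 t) (x3 t) for smooth x1 x2 x3 *)
definition frame_of_form ::
  "(real \<Rightarrow> real \<Rightarrow> real \<Rightarrow> real^4^4) \<Rightarrow> real set \<Rightarrow> (real \<Rightarrow> real^4) \<Rightarrow> (real \<Rightarrow> real^4^4) \<Rightarrow> bool" where
  "frame_of_form M I \<gamma> Z \<longleftrightarrow> is_frame I \<gamma> Z \<and>
     (\<exists>\<sigma> :: 4 \<Rightarrow> 4. \<sigma> permutes UNIV \<and> \<sigma> 1 = 1 \<and>
       (\<exists>x1 x2 x3 :: real \<Rightarrow> real. smooth_on I x1 \<and> smooth_on I x2 \<and> smooth_on I x3 \<and>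
         (\<forall>t\<in>I. ((\<lambda>s. \<chi> i. Z s $ \<sigma> i) has_vector_derivative
                    (M (x1 t) (x2 t) (x3 t) ** (\<chi> i. Z t $ \<sigma> i))) (at t))))"

definition frame_type_D where "frame_type_D = frame_of_form matD"
definition frame_type_F where "frame_type_F = frame_of_form matF"

end

theory Submission
  imports Defs
begin


fun Cn :: "real set \<Rightarrow> nat \<Rightarrow> (real \<Rightarrow> 'a::real_normed_vector) \<Rightarrow> bool" where
  "Cn I 0 f = True"
| "Cn I (Suc n) f = (\<exists>g. (\<forall>t\<in>I. (f has_vector_derivative g t) (at t)) \<and> Cn I n g)"

declare Cn.simps(2)[simp del]

lemma CnI: "(\<And>t. t \<in> I \<Longrightarrow> (f has_vector_derivative g t) (at t)) \<Longrightarrow> Cn I n g \<Longrightarrow> Cn I (Suc n) f"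
  unfolding Cn.simps(2)[of I n] by blast

lemma CnE: assumes "Cn I (Suc n) f"
  obtains g where "\<And>t. t \<in> I \<Longrightarrow> (f has_vector_derivative g t) (at t)" "Cn I n g"
  using assms unfolding Cn.simps(2)[of I n] by blast

lemma seq_Cn:
  assumes "\<forall>n. \<forall>t\<in>I. (D n has_vector_derivative D (Suc n) t) (at t)"
  shows "Cn I n (D k)"
proof (induction n arbitrary: k)
  case 0 then show ?case by simp
next
  case (Suc n)
  show ?case by (rule CnI[where g="D (Suc k)"]) (use assms Suc.IH in blast)+
qed

lemma smooth_Cn: "smooth_on I f \<Longrightarrow> Cn I n f"
  unfolding smooth_on_def using seq_Cn[where I=I and n=n and k=0] by blast

lemma Cn_mono: "Cn I (Suc n) f \<Longrightarrow> Cn I n f"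
proof (induction n arbitrary: f)
  case 0 then show ?case by simp
next
  case (Suc n)
  from Suc.prems obtain g where g: "\<And>t. t \<in> I \<Longrightarrow> (f has_vector_derivative g t) (at t)" "Cn I (Suc n) g"
    by (rule CnE) blast
  have "Cn I n g" using Suc.IH g(2) .
  then show ?case using g(1) by (rule CnI[rotated])
qed

lemma Cn_cong:
  assumes "open I" "Cn I n f" "\<forall>t\<in>I. f t = h t"
  shows "Cn I n h"
  using assms(2,3)
proof (induction n arbitrary: f h)
  case 0 then show ?case by simp
next
  case (Suc n)
  from Suc.prems(1) obtain g where g: "\<And>t. t \<in> I \<Longrightarrow> (f has_vector_derivative g t) (at t)" "Cn I n g"
    by (rule CnE) blast
  have "(h has_vector_derivative g t) (at t)" if "t \<in> I" for t
    by (rule has_vector_derivative_transform_within_open[OF g(1)[OF that] assms(1) that]) (use Suc.prems(2) in auto)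
  then show ?case using g(2) by (rule CnI)
qed

definition dv :: "(real \<Rightarrow> 'a::real_normed_vector) \<Rightarrow> real \<Rightarrow> 'a" where
  "dv g = (\<lambda>t. vector_derivative g (at t))"

lemma Cn_dv:
  assumes "open I" "Cn I (Suc n) g"
  shows "Cn I n (dv g) \<and> (\<forall>t\<in>I. (g has_vector_derivative dv g t) (at t))"
proof -
  obtain g' where g': "\<And>t. t \<in> I \<Longrightarrow> (g has_vector_derivative g' t) (at t)" "Cn I n g'"
    using assms(2) by (rule CnE) blast
  have eq: "\<forall>t\<in>I. g' t = dv g t" using g'(1) unfolding dv_def by (metis vector_derivative_at)
  show ?thesis using Cn_cong[OF assms(1) g'(2) eq] g'(1) eq by auto
qed

lemma Cn_iter:
  assumes "open I" "\<forall>m. Cn I m f"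
  shows "\<forall>m. Cn I m ((dv ^^ k) f)"
proof (induction k)
  case 0 then show ?case using assms by simp
next
  case (Suc k)
  show ?case
  proof
    fix m
    have h: "Cn I (Suc m) ((dv ^^ k) f)" using Suc by blast
    have "Cn I m (dv ((dv ^^ k) f))" using Cn_dv[OF assms(1) h] by blast
    then show "Cn I m ((dv ^^ Suc k) f)" by simp
  qed
qed

lemma Cn_smooth:
  assumes "open I" "\<forall>m. Cn I m f"
  shows "smooth_on I f"
  unfolding smooth_on_def
proof (intro exI[of _ "\<lambda>n. (dv ^^ n) f"] conjI allI ballI)
  fix n t assume "t \<in> I"
  have h: "Cn I (Suc 0) ((dv ^^ n) f)" using Cn_iter[OF assms, of n] by blast
  have "((dv ^^ n) f has_vector_derivative dv ((dv ^^ n) f) t) (at t)"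
    using Cn_dv[OF assms(1) h] \<open>t \<in> I\<close> by blast
  then show "((dv ^^ n) f has_vector_derivative (dv ^^ Suc n) f t) (at t)" by simp
qed simp

lemma Cn_const: "Cn I n (\<lambda>t. c)"
proof (induction n arbitrary: c)
  case 0 then show ?case by simp
next
  case (Suc n)
  show ?case by (rule CnI[where g="\<lambda>t. 0"]) (auto intro: Suc.IH)
qed

lemma Cn_add: "Cn I n f \<Longrightarrow> Cn I n g \<Longrightarrow> Cn I n (\<lambda>t. f t + g t)"
proof (induction n arbitrary: f g)
  case 0 then show ?case by simp
next
  case (Suc n)
  obtain f' where f': "\<And>t. t \<in> I \<Longrightarrow> (f has_vector_derivative f' t) (at t)" "Cn I n f'"
    using Suc.prems(1) by (rule CnE) blast
  obtain g' where g': "\<And>t. t \<in> I \<Longrightarrow> (g has_vector_derivative g' t) (at t)" "Cn I n g'"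
    using Suc.prems(2) by (rule CnE) blast
  show ?case
  proof (rule CnI[where g="\<lambda>t. f' t + g' t"])
    fix t assume "t \<in> I"
    then show "((\<lambda>t. f t + g t) has_vector_derivative f' t + g' t) (at t)"
      by (rule has_vector_derivative_add[OF f'(1) g'(1)]) (use \<open>t \<in> I\<close> in blast)+
  next
    show "Cn I n (\<lambda>t. f' t + g' t)" using Suc.IH f'(2) g'(2) .
  qed
qed

lemma Cn_linear: "bounded_linear L \<Longrightarrow> Cn I n f \<Longrightarrow> Cn I n (\<lambda>t. L (f t))"
proof (induction n arbitrary: f)
  case 0 then show ?case by simp
next
  case (Suc n)
  obtain f' where f': "\<And>t. t \<in> I \<Longrightarrow> (f has_vector_derivative f' t) (at t)" "Cn I n f'"
    using Suc.prems(2) by (rule CnE) blast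
  show ?case
  proof (rule CnI[where g="\<lambda>t. L (f' t)"])
    fix t assume "t \<in> I"
    then show "((\<lambda>t. L (f t)) has_vector_derivative L (f' t)) (at t)"
      by (rule bounded_linear.has_vector_derivative[OF Suc.prems(1) f'(1)])
  next
    show "Cn I n (\<lambda>t. L (f' t))" using Suc.IH Suc.prems(1) f'(2) .
  qed
qed

lemma Cn_scaleR: "Cn I n (f :: real \<Rightarrow> real) \<Longrightarrow> Cn I n g \<Longrightarrow> Cn I n (\<lambda>t. f t *\<^sub>R g t)"
proof (induction n arbitrary: f g)
  case 0 then show ?case by simp
next
  case (Suc n)
  obtain f' where f': "\<And>t. t \<in> I \<Longrightarrow> (f has_vector_derivative f' t) (at t)" "Cn I n f'"
    using Suc.prems(1) by (rule CnE) blast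
  obtain g' where g': "\<And>t. t \<in> I \<Longrightarrow> (g has_vector_derivative g' t) (at t)" "Cn I n g'"
    using Suc.prems(2) by (rule CnE) blast
  show ?case
  proof (rule CnI[where g="\<lambda>t. f t *\<^sub>R g' t + f' t *\<^sub>R g t"])
    fix t assume "t \<in> I"
    then have "(f has_real_derivative f' t) (at t)" using f'(1)
      by (simp add: has_real_derivative_iff_has_vector_derivative)
    from has_vector_derivative_scaleR[OF this g'(1)[OF \<open>t \<in> I\<close>]]
    show "((\<lambda>t. f t *\<^sub>R g t) has_vector_derivative (f t *\<^sub>R g' t + f' t *\<^sub>R g t)) (at t)" .
  next
    have a: "Cn I n (\<lambda>t. f t *\<^sub>R g' t)" using Suc.IH[OF Cn_mono[OF Suc.prems(1)] g'(2)] .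
    have b: "Cn I n (\<lambda>t. f' t *\<^sub>R g t)" using Suc.IH[OF f'(2) Cn_mono[OF Suc.prems(2)]] .
    show "Cn I n (\<lambda>t. f t *\<^sub>R g' t + f' t *\<^sub>R g t)" using Cn_add[OF a b] .
  qed
qed

lemma Cn_mult: "Cn I n (f :: real \<Rightarrow> real) \<Longrightarrow> Cn I n g \<Longrightarrow> Cn I n (\<lambda>t. f t * g t)"
  using Cn_scaleR[of I n f g] by simp

lemma Cn_cos_sin:
  assumes "\<forall>n. \<forall>t\<in>I. (D n has_vector_derivative D (Suc n) t) (at t)"
  shows "Cn I n (\<lambda>t. cos (D 0 t :: real)) \<and> Cn I n (\<lambda>t. sin (D 0 t))"
proof (induction n)
  case 0 then show ?case by simp
next
  case (Suc n)
  have d1: "Cn I n (D 1)" using seq_Cn[OF assms] .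
  have dc: "((\<lambda>t. cos (D 0 t)) has_vector_derivative (- sin (D 0 t) * D 1 t)) (at t)" if "t \<in> I" for t
  proof -
    have "(D 0 has_real_derivative D 1 t) (at t)" using assms that
      by (simp add: has_real_derivative_iff_has_vector_derivative)
    then have "((\<lambda>t. cos (D 0 t)) has_real_derivative (- sin (D 0 t) * D 1 t)) (at t)"
      by (rule DERIV_fun_cos)
    then show ?thesis by (simp add: has_real_derivative_iff_has_vector_derivative)
  qed
  have ds: "((\<lambda>t. sin (D 0 t)) has_vector_derivative (cos (D 0 t) * D 1 t)) (at t)" if "t \<in> I" for t
  proof -
    have "(D 0 has_real_derivative D 1 t) (at t)" using assms that
      by (simp add: has_real_derivative_iff_has_vector_derivative)
    then have "((\<lambda>t. sin (D 0 t)) has_real_derivative (cos (D 0 t) * D 1 t)) (at t)"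
      by (rule DERIV_fun_sin)
    then show ?thesis by (simp add: has_real_derivative_iff_has_vector_derivative)
  qed
  have "Cn I n (\<lambda>t. - (sin (D 0 t) * D 1 t))"
    using Cn_linear[OF bounded_linear_minus[OF bounded_linear_ident] Cn_mult[OF conjunct2[OF Suc.IH] d1]]
    by simp
  then have c1: "Cn I n (\<lambda>t. - sin (D 0 t) * D 1 t)" by simp
  have c2: "Cn I n (\<lambda>t. cos (D 0 t) * D 1 t)" using Cn_mult[OF conjunct1[OF Suc.IH] d1] .
  show ?case using CnI[OF dc c1] CnI[OF ds c2] by blast
qed



definition E1 :: "real^4^4 \<Rightarrow> real^4^4" where "E1 W = vector [W$1, W$2, 0, 0]"
definition E2 :: "real^4^4 \<Rightarrow> real^4^4" where "E2 W = vector [0, 0, W$3, W$4]"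
definition E3 :: "real^4^4 \<Rightarrow> real^4^4" where "E3 W = vector [0, 0, W$4, -W$3]"

lemma vec4_nth: "(vector [a,b,c,d] :: 'a::zero^4) $ 1 = a" "(vector [a,b,c,d] :: 'a^4) $ 2 = b"
  "(vector [a,b,c,d] :: 'a^4) $ 3 = c" "(vector [a,b,c,d] :: 'a^4) $ 4 = d"
  by (simp_all add: vector_def)

lemma alg:
  fixes W :: "real^4^4"
  assumes "c^2 + s^2 = 1"
  shows "E1 (matF x1 x2 x3 ** W) + c *\<^sub>R E2 (matF x1 x2 x3 ** W) + s *\<^sub>R E3 (matF x1 x2 x3 ** W)
     + (s * x3) *\<^sub>R E2 W + (- c * x3) *\<^sub>R E3 W
   = matD x1 (x2 * c) (- (x2 * s)) ** (E1 W + c *\<^sub>R E2 W + s *\<^sub>R E3 W)"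
proof -
  have s3: "c * (c * y) + s * (s * y) = y" for y
  proof -
    have "c * (c * y) + s * (s * y) = (c^2 + s^2) * y" by (simp add: power2_eq_square algebra_simps)
    then show ?thesis using assms by simp
  qed
  show ?thesis
  unfolding vec_eq_iff forall_4 matrix_matrix_mult_def
  apply (simp add: E1_def E2_def E3_def matD_def matF_def vec4_nth sum_4 algebra_simps)
  apply (simp add: s3)
  done
qed

definition Rm :: "real \<Rightarrow> real \<Rightarrow> real^4^4" where
  "Rm c s = vector [vector [1,0,0,0], vector [0,1,0,0], vector [0,0,c,s], vector [0,0,-s,c]]"

lemma Rm_eq: "E1 W + c *\<^sub>R E2 W + s *\<^sub>R E3 W = Rm c s ** W"
  unfolding vec_eq_iff forall_4 matrix_matrix_mult_def
  by (simp add: E1_def E2_def E3_def Rm_def vec4_nth sum_4 algebra_simps)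

lemma Rm_orth: assumes "c^2 + s^2 = 1" shows "orthogonal_matrix (Rm c s)"
proof -
  have s2: "s * s = 1 - c * c" using assms by (simp add: power2_eq_square)
  show ?thesis unfolding orthogonal_matrix vec_eq_iff forall_4 matrix_matrix_mult_def
    by (simp add: Rm_def vec4_nth sum_4 transpose_def mat_def algebra_simps s2)
qed

lemma perm_orth:
  fixes Z :: "real^4^4"
  assumes "orthogonal_matrix Z" "\<sigma> permutes UNIV"
  shows "orthogonal_matrix (\<chi> i. Z $ \<sigma> i)"
proof -
  have inj: "\<sigma> i = \<sigma> j \<longleftrightarrow> i = j" for i j using assms(2) by (meson permutes_inj injD)
  have r: "row i (\<chi> i. Z $ \<sigma> i) = row (\<sigma> i) Z" for i by (simp add: row_def)
  show ?thesis using assms(1) unfolding orthogonal_matrix_orthonormal_rows r using inj by metis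
qed



lemma bl_E1: "bounded_linear E1"
  unfolding linear_conv_bounded_linear[symmetric]
  by (rule linearI) (simp_all add: E1_def vec_eq_iff forall_4 vec4_nth)
lemma bl_E2: "bounded_linear E2"
  unfolding linear_conv_bounded_linear[symmetric]
  by (rule linearI) (simp_all add: E2_def vec_eq_iff forall_4 vec4_nth)
lemma bl_E3: "bounded_linear E3"
  unfolding linear_conv_bounded_linear[symmetric]
  by (rule linearI) (simp_all add: E3_def vec_eq_iff forall_4 vec4_nth)
lemma bl_perm: "bounded_linear (\<lambda>M::real^4^4. \<chi> i. M $ \<sigma> i)"
  unfolding linear_conv_bounded_linear[symmetric]
  by (rule linearI) (simp_all add: vec_eq_iff)

lemma antideriv:
  fixes f :: "real \<Rightarrow> real"
  assumes I: "open_interval I" and cont: "continuous_on I f"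
  obtains F where "\<forall>t\<in>I. (F has_vector_derivative f t) (at t)"
proof -
  from I obtain t0 where t0: "t0 \<in> I" unfolding open_interval_def by auto
  have opI: "open I" and ivI: "is_interval I" using I unfolding open_interval_def by auto
  have "((\<lambda>u. LBINT y=t0..u. f y) has_vector_derivative f t) (at t)" if t: "t \<in> I" for t
  proof -
    obtain e where e: "e > 0" "ball t e \<subseteq> I" using opI t open_contains_ball by blast
    define a where "a = min t0 (t - e/2)"
    define b where "b = max t0 (t + e/2)"
    have "t - e/2 \<in> ball t e" "t + e/2 \<in> ball t e" using e(1) by (simp_all add: dist_real_def)
    then have "t - e/2 \<in> I" "t + e/2 \<in> I" using e(2) by blast+
    then have ab: "a \<in> I" "b \<in> I" using t0 unfolding a_def b_def by (simp_all add: min_def max_def)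
    have iv: "\<forall>x. a \<le> x \<and> x \<le> b \<longrightarrow> x \<in> I" using ivI[unfolded is_interval_1] ab by blast
    have sub: "{a..b} \<subseteq> I"
    proof
      fix x assume "x \<in> {a..b}"
      then have "a \<le> x \<and> x \<le> b" by simp
      then show "x \<in> I" using iv by blast
    qed
    have le: "a \<le> t0" "t0 \<le> b" "a \<le> t" "t \<le> b" "a < t" "t < b"
      using e(1) unfolding a_def b_def by simp_all
    have cab: "continuous_on {a..b} f" using continuous_on_subset[OF cont sub] .
    have "((\<lambda>u. LBINT y=t0..u. f y) has_vector_derivative f t) (at t within {a..b})"
      using interval_integral_FTC2[OF le(1,2) cab le(3,4)] .
    moreover have "at t within {a..b} = at t"
      using at_within_Icc_at[OF le(5,6)] .
    ultimately show ?thesis by simp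
  qed
  then show ?thesis using that by blast
qed



theorem corollary1:
  fixes I :: "real set" and \<gamma> :: "real \<Rightarrow> real^4"
  assumes "unit_speed_curve I \<gamma>"
    and "\<exists>Z. frame_type_F I \<gamma> Z"
  shows "\<exists>Z. frame_type_D I \<gamma> Z"
proof -
  have I: "open_interval I" using assms(1) unfolding unit_speed_curve_def by blast
  then have opI: "open I" unfolding open_interval_def by blast
  obtain Z where ZF: "frame_type_F I \<gamma> Z" using assms(2) by blast
  then have frZ: "is_frame I \<gamma> Z" unfolding frame_type_F_def frame_of_form_def by blast
  from ZF obtain \<sigma> x1 x2 x3 where \<sigma>: "\<sigma> permutes UNIV" "\<sigma> 1 = 1"
    and sm: "smooth_on I x1" "smooth_on I x2" "smooth_on I x3"
    and dW0: "\<forall>t\<in>I. ((\<lambda>s. \<chi> i. Z s $ \<sigma> i) has_vector_derivative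
                    (matF (x1 t) (x2 t) (x3 t) ** (\<chi> i. Z t $ \<sigma> i))) (at t)"
    unfolding frame_type_F_def frame_of_form_def by blast
  define W where "W = (\<lambda>s. \<chi> i. Z s $ \<sigma> i)"
  have dW: "(W has_vector_derivative (matF (x1 t) (x2 t) (x3 t) ** W t)) (at t)" if "t \<in> I" for t
    using dW0 that unfolding W_def by blast
  from sm(3) obtain D3 where D3: "D3 0 = x3" "\<forall>n. \<forall>t\<in>I. (D3 n has_vector_derivative D3 (Suc n) t) (at t)"
    unfolding smooth_on_def by blast
  have "isCont x3 t" if "t \<in> I" for t
    using D3 that has_vector_derivative_continuous by metis
  then have cont3: "continuous_on I x3" by (intro continuous_at_imp_continuous_on) blast
  obtain F where F: "\<forall>t\<in>I. (F has_vector_derivative x3 t) (at t)" using antideriv[OF I cont3] by blast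
  define D\<theta> where "D\<theta> = (\<lambda>n. case n of 0 \<Rightarrow> (\<lambda>t. - F t) | Suc m \<Rightarrow> (\<lambda>t. - D3 m t))"
  have D\<theta>: "\<forall>n. \<forall>t\<in>I. (D\<theta> n has_vector_derivative D\<theta> (Suc n) t) (at t)"
  proof (intro allI ballI)
    fix n t assume t: "t \<in> I"
    show "(D\<theta> n has_vector_derivative D\<theta> (Suc n) t) (at t)"
    proof (cases n)
      case 0
      have "((\<lambda>t. - F t) has_vector_derivative - x3 t) (at t)"
        using has_vector_derivative_minus F t by blast
      then show ?thesis using 0 D3(1) by (simp add: D\<theta>_def)
    next
      case (Suc m)
      have "((\<lambda>t. - D3 m t) has_vector_derivative - D3 (Suc m) t) (at t)"
        using has_vector_derivative_minus D3(2) t by blast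
      then show ?thesis using Suc by (simp add: D\<theta>_def)
    qed
  qed
  define \<theta> where "\<theta> = D\<theta> 0"
  have \<theta>d: "(\<theta> has_real_derivative - x3 t) (at t)" if "t \<in> I" for t
  proof -
    have "(\<theta> has_vector_derivative D\<theta> 1 t) (at t)" using D\<theta> that unfolding \<theta>_def by simp
    moreover have "D\<theta> 1 t = - x3 t" using D3(1) by (simp add: D\<theta>_def)
    ultimately show ?thesis by (simp add: has_real_derivative_iff_has_vector_derivative)
  qed
  have cs: "Cn I n (\<lambda>t. cos (\<theta> t))" "Cn I n (\<lambda>t. sin (\<theta> t))" for n
    using Cn_cos_sin[OF D\<theta>, of n] unfolding \<theta>_def by blast+
  have Zsm: "smooth_on I Z" using frZ unfolding is_frame_def by blast
  have CnW: "Cn I n W" for n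
    unfolding W_def using Cn_linear[OF bl_perm[of \<sigma>] smooth_Cn[OF Zsm]] .
  define N where "N = (\<lambda>t. E1 (W t) + cos (\<theta> t) *\<^sub>R E2 (W t) + sin (\<theta> t) *\<^sub>R E3 (W t))"
  have CnN: "Cn I n N" for n
    unfolding N_def
    using Cn_add[OF Cn_add[OF Cn_linear[OF bl_E1 CnW] Cn_scaleR[OF cs(1) Cn_linear[OF bl_E2 CnW]]]
      Cn_scaleR[OF cs(2) Cn_linear[OF bl_E3 CnW]]] .
  have smN: "smooth_on I N" using Cn_smooth[OF opI] CnN by blast
  define y2 where "y2 = (\<lambda>t. x2 t * cos (\<theta> t))"
  define y3 where "y3 = (\<lambda>t. - (x2 t * sin (\<theta> t)))"
  have sm2: "smooth_on I y2" unfolding y2_def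
    using Cn_smooth[OF opI] Cn_mult[OF smooth_Cn[OF sm(2)] cs(1)] by blast
  have sm3: "smooth_on I y3" unfolding y3_def
    using Cn_smooth[OF opI] Cn_linear[OF bounded_linear_minus[OF bounded_linear_ident] Cn_mult[OF smooth_Cn[OF sm(2)] cs(2)]]
    by blast
  have orth: "orthogonal_matrix (N t)" if "t \<in> I" for t
  proof -
    have "orthogonal_matrix (Z t)" using frZ that unfolding is_frame_def by blast
    then have "orthogonal_matrix (W t)" unfolding W_def using perm_orth \<sigma>(1) by blast
    moreover have "orthogonal_matrix (Rm (cos (\<theta> t)) (sin (\<theta> t)))" by (rule Rm_orth) simp
    ultimately show ?thesis unfolding N_def Rm_eq using orthogonal_matrix_mul by blast
  qed
  have row1: "N t $ 1 = vector_derivative \<gamma> (at t)" if "t \<in> I" for t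
  proof -
    have "N t $ 1 = W t $ 1" by (simp add: N_def E1_def E2_def E3_def vec4_nth)
    also have "\<dots> = Z t $ 1" by (simp add: W_def \<sigma>(2))
    finally show ?thesis using frZ that unfolding is_frame_def by simp
  qed
  have dN: "(N has_vector_derivative (matD (x1 t) (y2 t) (y3 t) ** N t)) (at t)" if t: "t \<in> I" for t
  proof -
    let ?M = "matF (x1 t) (x2 t) (x3 t)"
    have dc: "((\<lambda>t. cos (\<theta> t)) has_real_derivative (- sin (\<theta> t) * (- x3 t))) (at t)"
      by (rule DERIV_fun_cos[OF \<theta>d[OF t]])
    have ds: "((\<lambda>t. sin (\<theta> t)) has_real_derivative (cos (\<theta> t) * (- x3 t))) (at t)"
      by (rule DERIV_fun_sin[OF \<theta>d[OF t]])
    have h1: "((\<lambda>s. E1 (W s)) has_vector_derivative E1 (?M ** W t)) (at t)"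
      by (rule bounded_linear.has_vector_derivative[OF bl_E1 dW[OF t]])
    have h2': "((\<lambda>s. E2 (W s)) has_vector_derivative E2 (?M ** W t)) (at t)"
      by (rule bounded_linear.has_vector_derivative[OF bl_E2 dW[OF t]])
    have h3': "((\<lambda>s. E3 (W s)) has_vector_derivative E3 (?M ** W t)) (at t)"
      by (rule bounded_linear.has_vector_derivative[OF bl_E3 dW[OF t]])
    note h2 = has_vector_derivative_scaleR[OF dc h2']
    note h3 = has_vector_derivative_scaleR[OF ds h3']
    note hN = has_vector_derivative_add[OF has_vector_derivative_add[OF h1 h2] h3]
    have eq: "E1 (?M ** W t) +
        (cos (\<theta> t) *\<^sub>R E2 (?M ** W t) + (- sin (\<theta> t) * - x3 t) *\<^sub>R E2 (W t)) +
        (sin (\<theta> t) *\<^sub>R E3 (?M ** W t) + (cos (\<theta> t) * - x3 t) *\<^sub>R E3 (W t))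
      = matD (x1 t) (y2 t) (y3 t) ** N t"
    proof -
      have a: "(cos (\<theta> t))^2 + (sin (\<theta> t))^2 = 1" by simp
      show ?thesis unfolding y2_def y3_def N_def using alg[OF a, of "x1 t" "x2 t" "x3 t" "W t"]
        by (simp add: algebra_simps)
    qed
    show ?thesis unfolding eq[symmetric] unfolding N_def by (rule hN)
  qed
  have fr: "is_frame I \<gamma> N" unfolding is_frame_def using smN orth row1 by blast
  have dd: "\<forall>t\<in>I. ((\<lambda>s. \<chi> i. N s $ id i) has_vector_derivative
            matD (x1 t) (y2 t) (y3 t) ** (\<chi> i. N t $ id i)) (at t)"
    using dN by simp
  have ex: "\<exists>x1 x2 x3 :: real \<Rightarrow> real. smooth_on I x1 \<and> smooth_on I x2 \<and> smooth_on I x3 \<and>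
         (\<forall>t\<in>I. ((\<lambda>s. \<chi> i. N s $ id i) has_vector_derivative
                    (matD (x1 t) (x2 t) (x3 t) ** (\<chi> i. N t $ id i))) (at t))"
    using sm(1) sm2 sm3 dd by blast
  have "frame_type_D I \<gamma> N"
    unfolding frame_type_D_def frame_of_form_def
  proof (rule conjI[OF fr], rule exI[of _ "id :: 4 \<Rightarrow> 4"])
    show "id permutes (UNIV :: 4 set) \<and> id 1 = (1::4) \<and>
      (\<exists>x1 x2 x3 :: real \<Rightarrow> real. smooth_on I x1 \<and> smooth_on I x2 \<and> smooth_on I x3 \<and>
         (\<forall>t\<in>I. ((\<lambda>s. \<chi> i. N s $ id i) has_vector_derivative
                    (matD (x1 t) (x2 t) (x3 t) ** (\<chi> i. N t $ id i))) (at t)))"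
      by (rule conjI[OF permutes_id conjI[OF id_apply ex]])
  qed
  then show ?thesis by blast
qed

end
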